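(* For every simple transitive type $T$, $I\ \llbracket T\cdot T\to T\rrbracket_e\ I$; that is, whenever $x\,\llbracket T\rrbracket_e\,y$ and $y\,\llbracket T\rrbracket_e\,z$, also $x\,\llbracket T\rrbracket_e\,z$.
   Context: Terms are those of the pure untyped $\lambda$-calculus, up to $\alpha$-equivalence; $=_{\beta\eta}$ is $\beta\eta$-convertibility; $I:=\lambda x.x$. Relational types: $R ::= X \mid R\to R' \mid \forall X.R \mid R^{\cup} \mid R\cdot R' \mid t$ (last form: promotion of a term). A relation on terms is $\beta\eta$-closed if closed under replacing either related term by a $\beta\eta$-equal one; $\mathcal{R}$ is the set of such relations; environments map type variables to $\mathcal{R}$. Interpretation: $\llbracket X\rrbracket_\gamma=\gamma(X)$; $t\,\llbracket R\to R'\rrbracket_\gamma\,t'$ iff for all $a,a'$ with $a\,\llbracket R\rrbracket_\gamma\,a'$, $t\,a\,\llbracket R'\rrbracket_\gamma\,t'\,a'$; $\llbracket \forall X.R\rrbracket_\gamma=\bigcap_{r\in\mathcal{R}}\llbracket R\rrbracket_{\gamma[X\mapsto r]}$; $t\,\llbracket R^\cup\rrbracket_\gamma\,t'$ iff $t'\,\llbracket R\rrbracket_\gamma\,t$; $t\,\llbracket R\cdot R'\rrbracket_\gamma\,t'$ iff $\exists t''$, $t\,\llbracket R\rrbracket_\gamma\,t''$ and $t''\,\llbracket R'\rrbracket_\gamma\,t'$; $\llbracket \hat t\rrbracket_\gamma=\{(t,t')\mid \hat t\,t=_{\beta\eta}t'\}$. $e$ maps every type variable to $=_{\beta\eta}$.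 Polarities $p\in\{+,-\}$, $\bar p$ the other; $\forall^p$: type variables are $\forall^p$; if $R$ is $\forall^{\bar p}$ and $R'$ is $\forall^p$ then $R\to R'$ is $\forall^p$; if $R$ is $\forall^+$ then $\forall X.R$ is $\forall^+$; if $R$ is $\forall^p$ then so is $R^\cup$; a promotion of $t=_{\beta\eta}I$ is $\forall^p$. $P$ ranges over $\forall^+$ types, $N$ over $\forall^-$ types. Write $t\bullet R:=t\cdot R\cdot t^\cup$. Simple transitive types: $T ::= P \mid P\to T \mid N\to T \mid t\bullet T$ ($t$ any term). *)

theory Defs
  imports Main
begin

datatype dB = Var nat | App dB dB | Abs dB

primrec lift :: "dB \<Rightarrow> nat \<Rightarrow> dB" where
  "lift (Var i) k = (if i < k then Var i else Var (Suc i))"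
| "lift (App s t) k = App (lift s k) (lift t k)"
| "lift (Abs s) k = Abs (lift s (Suc k))"

primrec subst :: "dB \<Rightarrow> dB \<Rightarrow> nat \<Rightarrow> dB" where
  "subst (Var i) s k = (if k < i then Var (i - 1) else if i = k then s else Var i)"
| "subst (App t u) s k = App (subst t s k) (subst u s k)"
| "subst (Abs t) s k = Abs (subst t (lift s 0) (Suc k))"

inductive bestep :: "dB \<Rightarrow> dB \<Rightarrow> bool" where
  beta: "bestep (App (Abs s) t) (subst s t 0)"
| eta:  "bestep (Abs (App (lift s 0) (Var 0))) s"
| appL: "bestep s t \<Longrightarrow> bestep (App s u) (App t u)"
| appR: "bestep s t \<Longrightarrow> bestep (App u s) (App u t)"
| abs:  "bestep s t \<Longrightarrow> bestep (Abs s) (Abs t)"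

definition beconv :: "dB \<Rightarrow> dB \<Rightarrow> bool" where
  "beconv = (\<lambda>s t. bestep s t \<or> bestep t s)\<^sup>*\<^sup>*"

definition Id_tm :: dB where "Id_tm = Abs (Var 0)"

datatype rty =
    TVar nat
  | Arr rty rty
  | All nat rty
  | Cnv rty
  | Comp rty rty
  | Prom dB

type_synonym trel = "dB \<Rightarrow> dB \<Rightarrow> bool"

definition be_closed :: "trel \<Rightarrow> bool" where
  "be_closed r \<longleftrightarrow> (\<forall>t t' u. r t t' \<and> beconv t u \<longrightarrow> r u t')
                   \<and> (\<forall>t t' u. r t t' \<and> beconv t' u \<longrightarrow> r t u)"

fun interp :: "(nat \<Rightarrow> trel) \<Rightarrow> rty \<Rightarrow> trel" where
  "interp \<gamma> (TVar X) = \<gamma> X"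
| "interp \<gamma> (Arr R R') = (\<lambda>t t'. \<forall>a a'. interp \<gamma> R a a' \<longrightarrow> interp \<gamma> R' (App t a) (App t' a'))"
| "interp \<gamma> (All X R) = (\<lambda>t t'. \<forall>r. be_closed r \<longrightarrow> interp (\<gamma>(X := r)) R t t')"
| "interp \<gamma> (Cnv R) = (\<lambda>t t'. interp \<gamma> R t' t)"
| "interp \<gamma> (Comp R R') = (\<lambda>t t'. \<exists>t''. interp \<gamma> R t t'' \<and> interp \<gamma> R' t'' t')"
| "interp \<gamma> (Prom s) = (\<lambda>t t'. beconv (App s t) t')"

definition env_e :: "nat \<Rightarrow> trel" where "env_e = (\<lambda>X. beconv)"

text \<open>forall-polarity: True = +, False = -.\<close>
inductive forallp :: "bool \<Rightarrow> rty \<Rightarrow> bool" where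
  var:  "forallp p (TVar X)"
| arr:  "forallp (\<not> p) R \<Longrightarrow> forallp p R' \<Longrightarrow> forallp p (Arr R R')"
| all:  "forallp True R \<Longrightarrow> forallp True (All X R)"
| cnv:  "forallp p R \<Longrightarrow> forallp p (Cnv R)"
| prom: "beconv t Id_tm \<Longrightarrow> forallp p (Prom t)"

definition bullet :: "dB \<Rightarrow> rty \<Rightarrow> rty" where
  "bullet t R = Comp (Comp (Prom t) R) (Cnv (Prom t))"

inductive simple_trans :: "rty \<Rightarrow> bool" where
  pos:    "forallp True P \<Longrightarrow> simple_trans P"
| arrP:   "forallp True P \<Longrightarrow> simple_trans T \<Longrightarrow> simple_trans (Arr P T)"
| arrN:   "forallp False N \<Longrightarrow> simple_trans T \<Longrightarrow> simple_trans (Arr N T)"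
| bullet: "simple_trans T \<Longrightarrow> simple_trans (bullet t T)"

end

theory Submission
  imports Defs
begin

lemma subst_Var: "subst (Var i) s k = (if k < i then Var (i - 1) else if i = k then s else Var i)"
  by simp

declare subst.simps(1)[simp del]

lemma lift_lift:
    "i < k + 1 \<Longrightarrow> lift (lift t i) (Suc k) = lift (lift t k) i"
  by (induct t arbitrary: i k) auto

lemma lift_subst:
    "j < i + 1 \<Longrightarrow> lift (subst t s j) i = subst (lift t (i + 1)) (lift s i) j"
  by (induct t arbitrary: i j s)
    (simp_all add: diff_Suc subst_Var lift_lift split: nat.split)

lemma lift_subst_lt:
    "i < j + 1 \<Longrightarrow> lift (subst t s j) i = subst (lift t i) (lift s i) (j + 1)"
  by (induct t arbitrary: i j s) (auto simp add: subst_Var lift_lift)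

lemma subst_lift [simp]:
    "subst (lift t k) s k = t"
  by (induct t arbitrary: k s) (simp_all add: subst_Var)

lemma subst_subst:
    "i < j + 1 \<Longrightarrow> subst (subst t (lift v i) (Suc j)) (subst u v j) i = subst (subst t u i) v j"
  by (induct t arbitrary: i j u v)
    (simp_all add: diff_Suc subst_Var lift_lift [symmetric] lift_subst_lt
      split: nat.split)

lemma bestep_lift: "bestep s t \<Longrightarrow> bestep (lift s k) (lift t k)"
proof (induct arbitrary: k rule: bestep.induct)
  case (beta s t)
  then show ?case using bestep.beta[of "lift s (Suc k)" "lift t k"]
    by (simp add: lift_subst)
next
  case (eta s)
  then show ?case using bestep.eta[of "lift s k"] by (simp add: lift_lift)
qed (auto intro: bestep.intros)

lemma bestep_subst: "bestep s t \<Longrightarrow> bestep (subst s u k) (subst t u k)"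
proof (induct arbitrary: k u rule: bestep.induct)
  case (beta s t)
  then show ?case using bestep.beta[of "subst s (lift u 0) (Suc k)" "subst t u k"]
    by (simp add: subst_subst[of 0 k, simplified])
next
  case (eta s)
  then show ?case using bestep.eta[of "subst s u k"]
    by (simp add: lift_subst_lt[of 0 k, simplified] subst_Var)
qed (auto intro: bestep.intros)

lemma beconv_refl[simp]: "beconv s s"
  by (simp add: beconv_def)

lemma beconv_sym: "beconv s t \<Longrightarrow> beconv t s"
  unfolding beconv_def
  by (induct rule: rtranclp_induct)
     (auto intro: converse_rtranclp_into_rtranclp)

lemma beconv_trans: "beconv s t \<Longrightarrow> beconv t u \<Longrightarrow> beconv s u"
  unfolding beconv_def by (rule rtranclp_trans)

lemma beconv_step: "bestep s t \<Longrightarrow> beconv s t"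
  unfolding beconv_def by auto

lemma beconv_map:
  assumes "\<And>s t. bestep s t \<Longrightarrow> bestep (f s) (f t)"
  shows "beconv s t \<Longrightarrow> beconv (f s) (f t)"
  unfolding beconv_def
proof (induct rule: rtranclp_induct)
  case (step y z)
  then show ?case using assms
    by (auto intro: rtranclp.rtrancl_into_rtrancl[where b="f y" and c="f z"])
qed simp

lemma beconv_AppL: "beconv s t \<Longrightarrow> beconv (App s u) (App t u)"
  by (rule beconv_map[of "\<lambda>s. App s u"]) (auto intro: bestep.intros)

lemma beconv_AppR: "beconv s t \<Longrightarrow> beconv (App u s) (App u t)"
  by (rule beconv_map[of "\<lambda>s. App u s"]) (auto intro: bestep.intros)

lemma beconv_App: "beconv s t \<Longrightarrow> beconv u v \<Longrightarrow> beconv (App s u) (App t v)"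
  by (meson beconv_AppL beconv_AppR beconv_trans)

lemma beconv_Abs: "beconv s t \<Longrightarrow> beconv (Abs s) (Abs t)"
  by (rule beconv_map[of "\<lambda>s. Abs s"]) (auto intro: bestep.intros)

lemma beconv_lift: "beconv s t \<Longrightarrow> beconv (lift s k) (lift t k)"
  by (rule beconv_map[of "\<lambda>s. lift s k"]) (auto intro: bestep_lift)

lemma beconv_subst: "beconv s t \<Longrightarrow> beconv (subst s u k) (subst t u k)"
  by (rule beconv_map[of "\<lambda>s. subst s u k"]) (auto intro: bestep_subst)

primrec closedn :: "nat \<Rightarrow> dB \<Rightarrow> bool" where
  "closedn k (Var i) = (i < k)"
| "closedn k (App s t) = (closedn k s \<and> closedn k t)"
| "closedn k (Abs s) = closedn (Suc k) s"

lemma closedn_mono: "closedn k s \<Longrightarrow> k \<le> m \<Longrightarrow> closedn m s"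
  by (induct s arbitrary: k m) auto

lemma closedn_ex: "\<exists>k. closedn k s"
proof (induct s)
  case (Var x) then show ?case by (auto intro: exI[of _ "Suc x"])
next
  case (App s1 s2)
  then obtain a b where "closedn a s1" "closedn b s2" by auto
  then show ?case by (metis closedn.simps(2) closedn_mono max.cobounded1 max.cobounded2)
next
  case (Abs s)
  then obtain a where "closedn a s" by auto
  then show ?case by (metis closedn.simps(3) closedn_mono le_SucI order_refl)
qed

lemma closedn_lift: "closedn k s \<Longrightarrow> closedn (Suc k) (lift s j)"
  by (induct s arbitrary: k j) auto

lemma closedn_subst: "closedn k s \<Longrightarrow> subst s u k = s"
  by (induct s arbitrary: k u) (auto simp: subst_Var)

lemma beconv_ext:
  assumes "\<And>a. beconv (App t a) (App t' a)"
  shows "beconv t t'"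
proof -
  obtain k1 where k1: "closedn k1 t" using closedn_ex by blast
  obtain k2 where k2: "closedn k2 t'" using closedn_ex by blast
  define n where "n = max k1 k2"
  have c1: "closedn n t" using k1 closedn_mono n_def by auto
  have c2: "closedn n t'" using k2 closedn_mono n_def by auto
  have "beconv (App t (Var n)) (App t' (Var n))" by (rule assms)
  then have "beconv (lift (App t (Var n)) 0) (lift (App t' (Var n)) 0)" by (rule beconv_lift)
  then have "beconv (subst (lift (App t (Var n)) 0) (Var 0) (Suc n))
                    (subst (lift (App t' (Var n)) 0) (Var 0) (Suc n))" by (rule beconv_subst)
  moreover have "subst (lift t 0) (Var 0) (Suc n) = lift t 0"
    using closedn_subst closedn_lift c1 by blast
  moreover have "subst (lift t' 0) (Var 0) (Suc n) = lift t' 0"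
    using closedn_subst closedn_lift c2 by blast
  ultimately have "beconv (App (lift t 0) (Var 0)) (App (lift t' 0) (Var 0))"
    by (simp add: subst_Var)
  then have "beconv (Abs (App (lift t 0) (Var 0))) (Abs (App (lift t' 0) (Var 0)))"
    by (rule beconv_Abs)
  then show ?thesis
    by (meson beconv_step beconv_sym beconv_trans bestep.eta)
qed

lemma beconv_Id: "beconv t Id_tm \<Longrightarrow> beconv (App t x) x"
proof -
  assume "beconv t Id_tm"
  then have "beconv (App t x) (App Id_tm x)" by (rule beconv_AppL)
  moreover have "bestep (App Id_tm x) x"
    using bestep.beta[of "Var 0" x] by (simp add: Id_tm_def subst_Var)
  ultimately show ?thesis by (meson beconv_step beconv_trans)
qed

lemma closedL: "be_closed r \<Longrightarrow> r t t' \<Longrightarrow> beconv t u \<Longrightarrow> r u t'"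
  unfolding be_closed_def by blast

lemma closedR: "be_closed r \<Longrightarrow> r t t' \<Longrightarrow> beconv t' u \<Longrightarrow> r t u"
  unfolding be_closed_def by blast

lemma closedI:
  "(\<And>t t' u. r t t' \<Longrightarrow> beconv t u \<Longrightarrow> r u t') \<Longrightarrow>
   (\<And>t t' u. r t t' \<Longrightarrow> beconv t' u \<Longrightarrow> r t u) \<Longrightarrow> be_closed r"
  unfolding be_closed_def by blast

lemma be_closed_beconv: "be_closed beconv"
  by (rule closedI) (meson beconv_sym beconv_trans)+

lemma interp_closed:
  "(\<And>X. be_closed (\<gamma> X)) \<Longrightarrow> be_closed (interp \<gamma> R)"
proof (induct R arbitrary: \<gamma>)
  case (TVar x) then show ?case by simp
next
  case (Arr R1 R2)
  have c2: "be_closed (interp \<gamma> R2)" using Arr by blast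
  show ?case
  proof (rule closedI)
    fix t t' u assume h: "interp \<gamma> (Arr R1 R2) t t'" and b: "beconv t u"
    show "interp \<gamma> (Arr R1 R2) u t'"
    proof (simp, intro allI impI)
      fix a a' assume "interp \<gamma> R1 a a'"
      then have "interp \<gamma> R2 (App t a) (App t' a')" using h by simp
      then show "interp \<gamma> R2 (App u a) (App t' a')"
        using closedL[OF c2] beconv_AppL[OF b] by blast
    qed
  next
    fix t t' u assume h: "interp \<gamma> (Arr R1 R2) t t'" and b: "beconv t' u"
    show "interp \<gamma> (Arr R1 R2) t u"
    proof (simp, intro allI impI)
      fix a a' assume "interp \<gamma> R1 a a'"
      then have "interp \<gamma> R2 (App t a) (App t' a')" using h by simp
      then show "interp \<gamma> R2 (App t a) (App u a')"
        using closedR[OF c2] beconv_AppL[OF b] by blast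
    qed
  qed
next
  case (All x1a R)
  have c: "\<And>r. be_closed r \<Longrightarrow> be_closed (interp (\<gamma>(x1a := r)) R)"
    using All by simp
  show ?case
  proof (rule closedI)
    fix t t' u assume h: "interp \<gamma> (All x1a R) t t'" and b: "beconv t u"
    show "interp \<gamma> (All x1a R) u t'"
      using h b closedL[OF c] by auto
  next
    fix t t' u assume h: "interp \<gamma> (All x1a R) t t'" and b: "beconv t' u"
    show "interp \<gamma> (All x1a R) t u"
      using h b closedR[OF c] by auto
  qed
next
  case (Cnv R)
  have c: "be_closed (interp \<gamma> R)" using Cnv by blast
  show ?case
  proof (rule closedI)
    fix t t' u assume "interp \<gamma> (Cnv R) t t'" "beconv t u"
    then show "interp \<gamma> (Cnv R) u t'" using closedR[OF c] by simp
  next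
    fix t t' u assume "interp \<gamma> (Cnv R) t t'" "beconv t' u"
    then show "interp \<gamma> (Cnv R) t u" using closedL[OF c] by simp
  qed
next
  case (Comp R1 R2)
  have c1: "be_closed (interp \<gamma> R1)" using Comp by blast
  have c2: "be_closed (interp \<gamma> R2)" using Comp by blast
  show ?case
  proof (rule closedI)
    fix t t' u assume h: "interp \<gamma> (Comp R1 R2) t t'" and b: "beconv t u"
    then obtain m where "interp \<gamma> R1 t m" "interp \<gamma> R2 m t'" by auto
    then show "interp \<gamma> (Comp R1 R2) u t'"
      using closedL[OF c1 _ b] by auto
  next
    fix t t' u assume h: "interp \<gamma> (Comp R1 R2) t t'" and b: "beconv t' u"
    then obtain m where "interp \<gamma> R1 t m" "interp \<gamma> R2 m t'" by auto
    then show "interp \<gamma> (Comp R1 R2) t u"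
      using closedR[OF c2 _ b] by auto
  qed
next
  case (Prom x)
  show ?case
  proof (rule closedI)
    fix t t' u assume h: "interp \<gamma> (Prom x) t t'" and b: "beconv t u"
    have "beconv (App x u) (App x t)" using beconv_AppR[OF b] beconv_sym by blast
    then show "interp \<gamma> (Prom x) u t'" using h beconv_trans by simp
  next
    fix t t' u assume h: "interp \<gamma> (Prom x) t t'" and b: "beconv t' u"
    then show "interp \<gamma> (Prom x) t u" using beconv_trans by simp
  qed
qed

lemma env_e_closed: "be_closed (env_e X)"
  by (simp add: env_e_def be_closed_beconv)

lemma interp_e_closed: "be_closed (interp env_e R)"
  by (rule interp_closed) (rule env_e_closed)

lemma env_e_upd: "env_e(X := beconv) = env_e"
  by (auto simp: env_e_def)

lemma polarity:
  "forallp p R \<Longrightarrow> (\<forall>x y. (p \<longrightarrow> interp env_e R x y \<longrightarrow> beconv x y)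
                        \<and> (\<not> p \<longrightarrow> beconv x y \<longrightarrow> interp env_e R x y))"
proof (induct rule: forallp.induct)
  case (var p X)
  then show ?case by (simp add: env_e_def)
next
  case (arr p R R')
  show ?case
  proof (intro allI conjI impI)
    fix x y assume p: p and h: "interp env_e (Arr R R') x y"
    show "beconv x y"
    proof (rule beconv_ext)
      fix a
      have "beconv a a" by simp
      then have "interp env_e R a a" using arr(2) p by blast
      then have "interp env_e R' (App x a) (App y a)" using h by simp
      then show "beconv (App x a) (App y a)" using arr(4) p by blast
    qed
  next
    fix x y assume p: "\<not> p" and h: "beconv x y"
    show "interp env_e (Arr R R') x y"
    proof (simp, intro allI impI)
      fix a a' assume "interp env_e R a a'"
      then have "beconv a a'" using arr(2) p by blast
      then have "beconv (App x a) (App y a')" using h beconv_App by blast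
      then show "interp env_e R' (App x a) (App y a')" using arr(4) p by blast
    qed
  qed
next
  case (all R X)
  show ?case
  proof (intro allI conjI impI)
    fix x y assume "interp env_e (All X R) x y"
    then have "interp (env_e(X := beconv)) R x y" using be_closed_beconv by simp
    then have "interp env_e R x y" using env_e_upd by simp
    then show "beconv x y" using all(2) by blast
  qed simp
next
  case (cnv p R)
  show ?case
  proof (intro allI conjI impI)
    fix x y assume "p" "interp env_e (Cnv R) x y"
    then show "beconv x y" using cnv(2) beconv_sym by auto
  next
    fix x y assume "\<not> p" "beconv x y"
    then show "interp env_e (Cnv R) x y" using cnv(2) beconv_sym by auto
  qed
next
  case (prom t p)
  have "\<And>x. beconv (App t x) x" using prom beconv_Id by blast
  then have "\<And>x y. interp env_e (Prom t) x y \<longleftrightarrow> beconv x y"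
    by simp (meson beconv_sym beconv_trans)
  then show ?case by simp
qed

lemma trans_main:
  "simple_trans T \<Longrightarrow> interp env_e T x y \<Longrightarrow> interp env_e T y z \<Longrightarrow> interp env_e T x z"
proof (induct T arbitrary: x y z rule: simple_trans.induct)
  case (pos P)
  then have "beconv x y" using polarity by blast
  then show ?case using pos closedL[OF interp_e_closed[of P]] beconv_sym
    by blast
next
  case (arrP P T)
  show ?case
  proof (simp, intro allI impI)
    fix a a' assume aa: "interp env_e P a a'"
    then have "beconv a a'" using arrP polarity by blast
    then have "interp env_e P a' a'" using aa closedL[OF interp_e_closed[of P]]
      by blast
    then have "interp env_e T (App y a') (App z a')" using arrP(5) by simp
    moreover have "interp env_e T (App x a) (App y a')" using arrP(4) aa by simp
    ultimately show "interp env_e T (App x a) (App z a')"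
      using arrP(3) by blast
  qed
next
  case (arrN N T)
  show ?case
  proof (simp, intro allI impI)
    fix a a' assume aa: "interp env_e N a a'"
    have "interp env_e N a a" using arrN polarity by auto
    then have "interp env_e T (App x a) (App y a)" using arrN(4) by simp
    moreover have "interp env_e T (App y a) (App z a')" using arrN(5) aa by simp
    ultimately show "interp env_e T (App x a) (App z a')"
      using arrN(3) by blast
  qed
next
  case (bullet T t)
  have cl: "be_closed (interp env_e T)" by (rule interp_e_closed)
  have ch: "\<And>u v. interp env_e (bullet t T) u v \<longleftrightarrow> interp env_e T (App t u) (App t v)"
  proof
    fix u v assume "interp env_e (bullet t T) u v"
    then obtain m n where "beconv (App t u) m" "interp env_e T m n" "beconv (App t v) n"
      unfolding bullet_def by auto
    then show "interp env_e T (App t u) (App t v)"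
      using closedL[OF cl] closedR[OF cl] beconv_sym by blast
  next
    fix u v assume h: "interp env_e T (App t u) (App t v)"
    have "interp env_e (Comp (Prom t) T) u (App t v)"
      using h beconv_refl[of "App t u"] by (simp only: interp.simps) blast
    moreover have "interp env_e (Cnv (Prom t)) (App t v) v"
      using beconv_refl[of "App t v"] by (simp only: interp.simps)
    ultimately show "interp env_e (bullet t T) u v"
      unfolding bullet_def by (simp only: interp.simps) blast
  qed
  show ?case using bullet ch by blast
qed

theorem mainTheorem13:
  assumes "simple_trans T"
  shows "interp env_e (Arr (Comp T T) T) Id_tm Id_tm"
proof (simp, intro allI impI)
  fix a a' assume "\<exists>t''. interp env_e T a t'' \<and> interp env_e T t'' a'"
  then have h: "interp env_e T a a'" using trans_main assms by blast
  have "beconv (App Id_tm a) a" "beconv (App Id_tm a') a'"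
    by (simp_all add: beconv_Id)
  then show "interp env_e T (App Id_tm a) (App Id_tm a')"
    using h closedL[OF interp_e_closed[of T]] closedR[OF interp_e_closed[of T]] beconv_sym
    by blast
qed

end
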